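(* With $f$ as in the context (and $n\ge 3$), $\langle v_0\rangle=\{x\in V : x\wedge V\subseteq Vf\}$.
   Context: Let $p$ be a prime, $\mathbb{F}=\mathrm{GF}(p)$, and $n\ge 3$. Let $V$ be an $\mathbb{F}$-vector space with basis $v_0,\dots,v_n$, $U=\langle v_1,\dots,v_n\rangle$, $W=\Lambda^2V$, and for $x\in V$, $x\wedge V=\{x\wedge y:y\in V\}$. Maps are written on the right. The linear map $f:V\to W$ is given by $v_0f=\sum_{i=1}^n b_i\, v_0\wedge v_i+\sum_{1\le j<k\le n}c_{j,k}\, v_j\wedge v_k$ and $v_if=\sum_{j=1}^n A_{i,j}\, v_0\wedge v_j$ for $1\le i\le n$, where $b\in\mathbb{F}^n$ and $c=(c_{j,k})\in\mathbb{F}^{\binom n2}$ are nonzero, and $A$ is the $n\times n$ companion matrix of the minimal polynomial over $\mathbb{F}$ of a primitive element of $\mathrm{GF}(p^n)$. *)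

theory Defs
  imports "HOL-Library.Function_Algebras" "HOL-Library.Cardinality" "HOL-Computational_Algebra.Polynomial" "HOL-Computational_Algebra.Primes"
begin

text \<open>V = F^(n+1) is represented by functions nat => F that
vanish outside {0..n}; coordinate i is the coefficient of v_i.
W = Lambda^2 V is represented by functions on pairs (j,k); coordinate (j,k) with
j < k <= n is the coefficient of v_j wedge v_k (all other coordinates are 0).\<close>

definition vecV :: "nat \<Rightarrow> (nat \<Rightarrow> 'a::field) set" where
  "vecV n = {x. \<forall>i. n < i \<longrightarrow> x i = 0}"

definition basisV :: "nat \<Rightarrow> nat \<Rightarrow> 'a::field" where
  "basisV i = (\<lambda>l. if l = i then 1 else 0)"

definition wedge :: "nat \<Rightarrow> (nat \<Rightarrow> 'a::field) \<Rightarrow> (nat \<Rightarrow> 'a) \<Rightarrow> (nat \<times> nat \<Rightarrow> 'a)" where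
  "wedge n x y = (\<lambda>(j,k). if j < k \<and> k \<le> n then x j * y k - x k * y j else 0)"

definition basisW :: "nat \<Rightarrow> nat \<Rightarrow> (nat \<times> nat \<Rightarrow> 'a::field)" where
  "basisW j k = (\<lambda>jk. if jk = (j,k) then 1 else 0)"

definition scaleW :: "'a::field \<Rightarrow> (nat \<times> nat \<Rightarrow> 'a) \<Rightarrow> (nat \<times> nat \<Rightarrow> 'a)" where
  "scaleW s w = (\<lambda>jk. s * w jk)"

text \<open>The linear map f : V -> W, written on the right (x f), given on the basis.\<close>

definition f_v0 :: "nat \<Rightarrow> (nat \<Rightarrow> 'a::field) \<Rightarrow> (nat \<Rightarrow> nat \<Rightarrow> 'a) \<Rightarrow> (nat \<times> nat \<Rightarrow> 'a)" where
  "f_v0 n b c = (\<Sum>i\<in>{1..n}. scaleW (b i) (basisW 0 i))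
               + (\<Sum>(j,k)\<in>{(j,k). 1 \<le> j \<and> j < k \<and> k \<le> n}. scaleW (c j k) (basisW j k))"

definition f_vi :: "nat \<Rightarrow> (nat \<Rightarrow> nat \<Rightarrow> 'a::field) \<Rightarrow> nat \<Rightarrow> (nat \<times> nat \<Rightarrow> 'a)" where
  "f_vi n A i = (\<Sum>j\<in>{1..n}. scaleW (A i j) (basisW 0 j))"

definition fmap :: "nat \<Rightarrow> (nat \<Rightarrow> 'a::field) \<Rightarrow> (nat \<Rightarrow> nat \<Rightarrow> 'a) \<Rightarrow> (nat \<Rightarrow> nat \<Rightarrow> 'a)
                    \<Rightarrow> (nat \<Rightarrow> 'a) \<Rightarrow> (nat \<times> nat \<Rightarrow> 'a)" where
  "fmap n b c A x = scaleW (x 0) (f_v0 n b c) + (\<Sum>i\<in>{1..n}. scaleW (x i) (f_vi n A i))"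

text \<open>Companion matrix (indices 1..n) of a monic polynomial
q = x^n + a_(n-1) x^(n-1) + ... + a_0, in the row convention suited to maps on the
right: v_i A = v_(i+1) for i < n and v_n A = - sum_j a_(j-1) v_j.\<close>

definition companion :: "nat \<Rightarrow> 'a::field poly \<Rightarrow> nat \<Rightarrow> nat \<Rightarrow> 'a" where
  "companion n q i j = (if i < n then (if j = i + 1 then 1 else 0) else - coeff q (j - 1))"

definition ring_embedding :: "('a::field \<Rightarrow> 'b::field) \<Rightarrow> bool" where
  "ring_embedding \<phi> \<longleftrightarrow> \<phi> 1 = 1 \<and> (\<forall>x y. \<phi> (x + y) = \<phi> x + \<phi> y \<and> \<phi> (x * y) = \<phi> x * \<phi> y)"

definition primitive_element :: "'b::field \<Rightarrow> bool" where
  "primitive_element \<alpha> \<longleftrightarrow> range (\<lambda>k::nat. \<alpha> ^ k) = UNIV - {0}"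

definition is_minimal_polynomial :: "('a::field \<Rightarrow> 'b::field) \<Rightarrow> 'b \<Rightarrow> 'a poly \<Rightarrow> bool" where
  "is_minimal_polynomial \<phi> \<alpha> q \<longleftrightarrow>
     lead_coeff q = 1 \<and> poly (map_poly \<phi> q) \<alpha> = 0 \<and>
     (\<forall>r. r \<noteq> 0 \<and> poly (map_poly \<phi> r) \<alpha> = 0 \<longrightarrow> degree q \<le> degree r)"

end

theory Submission
  imports Defs
begin

lemma sum_apply_fun: "(sum f A) x = (\<Sum>a\<in>A. f a x)"
  by (induction A rule: infinite_finite_induct) auto

lemma finS: "finite {(j,k). 1 \<le> j \<and> j < k \<and> k \<le> (n::nat)}"
  by (rule finite_subset[of _ "{1..n} \<times> {1..n}"]) auto

lemma fv0_apply:
  "f_v0 n b c (j,k) = (if j = 0 \<and> 1 \<le> k \<and> k \<le> n then b k else 0)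
     + (if 1 \<le> j \<and> j < k \<and> k \<le> n then c j k else 0)"
proof -
  have 1: "(\<Sum>i\<in>{1..n}. scaleW (b i) (basisW 0 i)) (j,k) = (if j = 0 \<and> 1 \<le> k \<and> k \<le> n then b k else 0)"
    unfolding sum_apply_fun scaleW_def basisW_def
    by (simp add: sum.delta' if_distrib cong: if_cong) (auto intro!: sum.neutral)
  have 2: "(\<Sum>(j',k')\<in>{(j,k). 1 \<le> j \<and> j < k \<and> k \<le> n}. scaleW (c j' k') (basisW j' k')) (j,k)
       = (\<Sum>a\<in>{(j,k). 1 \<le> j \<and> j < k \<and> k \<le> n}. if a = (j,k) then c j k else 0)"
    unfolding sum_apply_fun
    by (rule sum.cong) (auto simp: scaleW_def basisW_def split: if_splits)
  also have "\<dots> = (if 1 \<le> j \<and> j < k \<and> k \<le> n then c j k else 0)"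
    using finS[of n] by (simp add: sum.delta)
  finally show ?thesis unfolding f_v0_def plus_fun_apply using 1 by simp
qed

lemma fvi_apply:
  "f_vi n A i (j,k) = (if j = 0 \<and> 1 \<le> k \<and> k \<le> n then A i k else 0)"
  unfolding f_vi_def sum_apply_fun scaleW_def basisW_def
  by (simp add: sum.delta' if_distrib cong: if_cong) (auto intro!: sum.neutral)

lemma fmap_apply:
  "fmap n b c A z (j,k) = z 0 * ((if j = 0 \<and> 1 \<le> k \<and> k \<le> n then b k else 0)
     + (if 1 \<le> j \<and> j < k \<and> k \<le> n then c j k else 0))
     + (\<Sum>i\<in>{1..n}. z i * (if j = 0 \<and> 1 \<le> k \<and> k \<le> n then A i k else 0))"
  unfolding fmap_def plus_fun_apply sum_apply_fun
  by (simp add: scaleW_def fv0_apply fvi_apply)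


lemma coeff0_nz:
  assumes "ring_embedding \<phi>" "primitive_element (\<alpha>::'b::field)" "is_minimal_polynomial \<phi> \<alpha> (q::'a::field poly)"
  shows "coeff q 0 \<noteq> 0"
proof
  assume h: "coeff q 0 = 0"
  have phi0: "\<phi> 0 = 0"
  proof -
    have "\<phi> (0 + 0) = \<phi> 0 + \<phi> 0" using assms(1) unfolding ring_embedding_def by blast
    then show ?thesis by (metis add.right_neutral add_left_cancel)
  qed
  have a0: "\<alpha> \<noteq> 0"
  proof
    assume "\<alpha> = 0"
    then have "(0::'b) \<in> range (\<lambda>k::nat. \<alpha> ^ k)" by (metis power_one_right rangeI)
    then show False using assms(2) unfolding primitive_element_def by auto
  qed
  obtain a r where qr: "q = pCons a r" by (cases q) auto
  have "a = 0" using h qr by simp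
  have q0: "q \<noteq> 0" using assms(3) unfolding is_minimal_polynomial_def by auto
  then have r0: "r \<noteq> 0" using qr \<open>a = 0\<close> by auto
  have "poly (map_poly \<phi> q) \<alpha> = 0" using assms(3) unfolding is_minimal_polynomial_def by auto
  then have "\<alpha> * poly (map_poly \<phi> r) \<alpha> = 0"
    using qr \<open>a = 0\<close> by (simp add: map_poly_pCons phi0)
  then have "poly (map_poly \<phi> r) \<alpha> = 0" using a0 by simp
  then have "degree q \<le> degree r" using assms(3) r0 unfolding is_minimal_polynomial_def by auto
  moreover have "degree q = Suc (degree r)" using qr r0 by (simp add: degree_pCons_eq)
  ultimately show False by simp
qed

theorem lemma3p2:
  fixes p n :: nat
    and b :: "nat \<Rightarrow> 'a::{field,finite}"
    and c :: "nat \<Rightarrow> nat \<Rightarrow> 'a"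
    and \<phi> :: "'a \<Rightarrow> 'b::{field,finite}"
    and \<alpha> :: 'b
    and q :: "'a poly"
  assumes "prime p" and "CARD('a) = p" and "n \<ge> 3"
    and "CARD('b) = p ^ n" and "ring_embedding \<phi>"
    and "primitive_element \<alpha>" and "is_minimal_polynomial \<phi> \<alpha> q"
    and "\<exists>i\<in>{1..n}. b i \<noteq> 0"
    and "\<exists>j k. 1 \<le> j \<and> j < k \<and> k \<le> n \<and> c j k \<noteq> 0"
  shows "{(\<lambda>l. t * basisV 0 l) | t. True} =
         {x \<in> vecV n. \<forall>y \<in> vecV n. wedge n x y \<in> fmap n b c (companion n q) ` vecV n}"
proof (rule set_eqI, rule iffI)
  let ?A = "companion n q"
  have a0: "coeff q 0 \<noteq> 0" using coeff0_nz assms(5,6,7) by blast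
  fix x :: "nat \<Rightarrow> 'a" assume "x \<in> {(\<lambda>l. t * basisV 0 l) | t. True}"
  then obtain t where xt: "x = (\<lambda>l. t * basisV 0 l)" by auto
  have xV: "x \<in> vecV n" unfolding xt vecV_def basisV_def by auto
  moreover have "wedge n x y \<in> fmap n b c ?A ` vecV n" if yV: "y \<in> vecV n" for y :: "nat \<Rightarrow> 'a"
  proof -
    define s where "s = - t * y 1 / coeff q 0"
    define z where "z = (\<lambda>i. if i = n then s else if 1 \<le> i \<and> i < n then t * y (Suc i) + s * coeff q i else 0)"
    have zV: "z \<in> vecV n" unfolding z_def vecV_def by auto
    have z0: "z 0 = 0" using assms(3) unfolding z_def by auto
    have "fmap n b c ?A z = wedge n x y"
    proof (rule ext, clarify)
      fix j k
      show "fmap n b c ?A z (j,k) = wedge n x y (j,k)"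
      proof (cases "j = 0 \<and> 1 \<le> k \<and> k \<le> n")
        case True
        then have j0: "j = 0" and k1: "1 \<le> k" and kn: "k \<le> n" by auto
        have split: "{1..n} = insert n {1..<n}" using assms(3) by auto
        have "(\<Sum>i\<in>{1..n}. z i * ?A i k) = z n * ?A n k + (\<Sum>i\<in>{1..<n}. z i * ?A i k)"
          unfolding split by simp
        also have "(\<Sum>i\<in>{1..<n}. z i * ?A i k) = (\<Sum>i\<in>{1..<n}. if i = k - 1 then z i else 0)"
          by (rule sum.cong) (use k1 in \<open>auto simp: companion_def\<close>)
        also have "\<dots> = (if k - 1 \<in> {1..<n} then z (k - 1) else 0)"
          by (simp add: sum.delta)
        finally have S: "(\<Sum>i\<in>{1..n}. z i * ?A i k) = z n * ?A n k + (if k - 1 \<in> {1..<n} then z (k - 1) else 0)" .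
        have "fmap n b c ?A z (j,k) = (\<Sum>i\<in>{1..n}. z i * ?A i k)"
          unfolding fmap_apply using True z0 by simp
        also have "\<dots> = t * y k"
        proof (cases "k = 1")
          case True
          then show ?thesis unfolding S using a0 by (simp add: z_def companion_def s_def)
        next
          case False
          then have "k - 1 \<in> {1..<n}" using k1 kn by auto
          moreover have "z (k - 1) = t * y k + s * coeff q (k - 1)"
            using False k1 kn unfolding z_def by auto
          ultimately show ?thesis unfolding S using False k1
            by (simp add: z_def companion_def)
        qed
        also have "\<dots> = wedge n x y (j,k)"
          using j0 k1 kn unfolding wedge_def xt basisV_def by auto
        finally show ?thesis .
      next
        case False
        have "fmap n b c ?A z (j,k) = 0"
        proof -
          have F: "(j = 0 \<and> 1 \<le> k \<and> k \<le> n) = False" using False by simp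
          show ?thesis unfolding fmap_apply F using z0 by simp
        qed
        moreover have "wedge n x y (j,k) = 0"
          using False unfolding wedge_def xt basisV_def by auto
        ultimately show ?thesis by simp
      qed
    qed
    then show ?thesis using zV by (metis image_eqI)
  qed
  ultimately show "x \<in> {x \<in> vecV n. \<forall>y \<in> vecV n. wedge n x y \<in> fmap n b c ?A ` vecV n}" by blast
next
  let ?A = "companion n q"
  fix x :: "nat \<Rightarrow> 'a" assume "x \<in> {x \<in> vecV n. \<forall>y \<in> vecV n. wedge n x y \<in> fmap n b c ?A ` vecV n}"
  then have xV: "x \<in> vecV n" and P: "\<And>y. y \<in> vecV n \<Longrightarrow> wedge n x y \<in> fmap n b c ?A ` vecV n" by auto
  have img: "\<exists>z0. \<forall>j k. 1 \<le> j \<and> j < k \<and> k \<le> n \<longrightarrow> w (j,k) = z0 * c j k"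
    if "w \<in> fmap n b c ?A ` vecV n" for w
  proof -
    from that obtain z where "w = fmap n b c ?A z" by auto
    then show ?thesis by (intro exI[of _ "z 0"]) (auto simp: fmap_apply)
  qed
  have xm0: "x m = 0" if m1: "1 \<le> m" and mn: "m \<le> n" for m
  proof (rule ccontr)
    assume xm: "x m \<noteq> 0"
    obtain l1 l2 where l: "l1 \<in> {1..n}" "l2 \<in> {1..n}" "l1 \<noteq> l2" "l1 \<noteq> m" "l2 \<noteq> m"
    proof (cases "m = 1")
      case True then show ?thesis using that[of 2 3] assms(3) by auto
    next
      case F1: False
      show ?thesis
      proof (cases "m = 2")
        case True then show ?thesis using that[of 1 3] assms(3) by auto
      next
        case False then show ?thesis using that[of 1 2] assms(3) F1 by auto
      qed
    qed
    have eV: "basisV l \<in> vecV n" if "l \<in> {1..n}" for l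
      using that unfolding vecV_def basisV_def by auto
    have wm: "wedge n x (basisV l) (min m l, max m l) \<noteq> 0" if "l \<in> {1..n}" "l \<noteq> m" for l
      using that xm mn unfolding wedge_def basisV_def by (auto simp: min_def max_def)
    have wz: "wedge n x (basisV l) (j, k) = 0" if "l \<noteq> j" "l \<noteq> k" for l j k
      using that unfolding wedge_def basisV_def by auto
    obtain s1 where s1: "\<forall>j k. 1 \<le> j \<and> j < k \<and> k \<le> n \<longrightarrow> wedge n x (basisV l1) (j,k) = s1 * c j k"
      using img[OF P[OF eV[OF l(1)]]] by blast
    obtain s2 where s2: "\<forall>j k. 1 \<le> j \<and> j < k \<and> k \<le> n \<longrightarrow> wedge n x (basisV l2) (j,k) = s2 * c j k"
      using img[OF P[OF eV[OF l(2)]]] by blast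
    have r1: "1 \<le> min m l1 \<and> min m l1 < max m l1 \<and> max m l1 \<le> n" using l m1 mn by auto
    have r2: "1 \<le> min m l2 \<and> min m l2 < max m l2 \<and> max m l2 \<le> n" using l m1 mn by auto
    have "s1 * c (min m l1) (max m l1) \<noteq> 0" using s1 r1 wm[OF l(1) l(4)] by metis
    moreover have "s2 * c (min m l1) (max m l1) = 0"
      using s2 r1 wz[of l2 "min m l1" "max m l1"] l by (metis min_def max_def)
    ultimately have s20: "s2 = 0" by simp
    have "s2 * c (min m l2) (max m l2) \<noteq> 0" using s2 r2 wm[OF l(2) l(5)] by metis
    then show False using s20 by simp
  qed
  have "x = (\<lambda>l. x 0 * basisV 0 l)"
  proof
    fix l
    show "x l = x 0 * basisV 0 l"
    proof (cases "l = 0")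
      case True then show ?thesis by (simp add: basisV_def)
    next
      case False
      then show ?thesis
        using xm0[of l] xV unfolding vecV_def basisV_def by (cases "l \<le> n") auto
    qed
  qed
  then show "x \<in> {(\<lambda>l. t * basisV 0 l) | t. True}" by blast
qed

end
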